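(* Let $n\in\{0,1,2,\dots\}$, let $q\in C(0,1)$ be nonnegative with compact support in $(0,1)$, and let $\ell\ge2$ be an integer. Then for all $x_1,x_2\in[2^{-\ell},1-2^{-\ell}]$, $$\frac{u_{q,n}(x_1)}{u_{q,n}(x_2)}\le\exp\bigl[2^{\ell/2}\|q\|_{\ell+1}\bigr].$$
   Context: For $0<a<b<1$, $\mathring W_2^1(a,b)$ is the closure of $C_0^\infty(a,b)$ in $W_2^1$, extended by zero to $[0,1]$; for an integer $m\ge2$, $\|q\|_m=\sup\{\int_0^1 qy\,dx: y\in\mathring W_2^1(2^{-m},1-2^{-m}),\ \|y'\|_{L_2[0,1]}\le1\}$. For such $q$, $\lambda_0(q)<\lambda_1(q)<\dots$ are the eigenvalues of $-y''+qy=\lambda y$, $y(0)=y(1)=0$, $y_{q,n}$ is a real eigenfunction for $\lambda_n(q)$ normalized by $\|y_{q,n}\|_{L_2[0,1]}=1$, and $u_{q,n}=(y_{q,n}')^2+\lambda_n(q)y_{q,n}^2$. *)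

theory Defs
  imports "HOL-Analysis.Analysis"
begin

definition smooth_compact :: "real \<Rightarrow> real \<Rightarrow> (real \<Rightarrow> real) \<Rightarrow> bool" where
  "smooth_compact a b \<phi> \<longleftrightarrow>
     (\<forall>k::nat. \<forall>x. ((deriv ^^ k) \<phi>) differentiable (at x)) \<and>
     (\<exists>c d. a < c \<and> c \<le> d \<and> d < b \<and> (\<forall>x. x \<notin> {c..d} \<longrightarrow> \<phi> x = 0))"

definition L2_01 :: "(real \<Rightarrow> real) \<Rightarrow> bool" where
  "L2_01 f \<longleftrightarrow> f \<in> borel_measurable lborel \<and>
     integrable lborel (\<lambda>x. indicator {0..1} x * (f x)\<^sup>2)"

definition L2_sq :: "(real \<Rightarrow> real) \<Rightarrow> real" where
  "L2_sq f = (LINT x:{0..1}|lborel. (f x)\<^sup>2)"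

(* y belongs to the closure of C_0^infinity(a,b) in W_2^1 (extended by zero to [0,1]),
   and g is its (weak) derivative: there are test functions phi_k with
   phi_k \<rightarrow> y and phi_k' \<rightarrow> g in L_2[0,1]. *)
definition W0 :: "real \<Rightarrow> real \<Rightarrow> (real \<Rightarrow> real) \<Rightarrow> (real \<Rightarrow> real) \<Rightarrow> bool" where
  "W0 a b y g \<longleftrightarrow> L2_01 y \<and> L2_01 g \<and>
     (\<exists>\<phi>::nat \<Rightarrow> real \<Rightarrow> real. (\<forall>k. smooth_compact a b (\<phi> k)) \<and>
        (\<lambda>k. L2_sq (\<lambda>x. \<phi> k x - y x)) \<longlonglongrightarrow> 0 \<and>
        (\<lambda>k. L2_sq (\<lambda>x. deriv (\<phi> k) x - g x)) \<longlonglongrightarrow> 0)"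

definition qnorm :: "(real \<Rightarrow> real) \<Rightarrow> nat \<Rightarrow> real" where
  "qnorm q m = Sup {LINT x:{0..1}|lborel. q x * y x | y g.
      W0 (1 / 2 ^ m) (1 - 1 / 2 ^ m) y g \<and> L2_sq g \<le> 1}"

definition eigfun :: "(real \<Rightarrow> real) \<Rightarrow> real \<Rightarrow> (real \<Rightarrow> real) \<Rightarrow> bool" where
  "eigfun q lam y \<longleftrightarrow> continuous_on {0..1} y \<and> y 0 = 0 \<and> y 1 = 0 \<and>
     (\<exists>x\<in>{0..1}. y x \<noteq> 0) \<and>
     (\<forall>x\<in>{0<..<1}. y differentiable (at x) \<and>
        (deriv y has_real_derivative ((q x - lam) * y x)) (at x))"

definition eigval :: "(real \<Rightarrow> real) \<Rightarrow> real \<Rightarrow> bool" where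
  "eigval q lam \<longleftrightarrow> (\<exists>y. eigfun q lam y)"

definition eig :: "(real \<Rightarrow> real) \<Rightarrow> nat \<Rightarrow> real" where
  "eig q n = (THE lam. eigval q lam \<and> card {mu. eigval q mu \<and> mu < lam} = n)"

definition uqn :: "(real \<Rightarrow> real) \<Rightarrow> nat \<Rightarrow> (real \<Rightarrow> real) \<Rightarrow> real \<Rightarrow> real" where
  "uqn q n y x = (deriv y x)\<^sup>2 + eig q n * (y x)\<^sup>2"

end

theory Submission
  imports Defs "HOL-Computational_Algebra.Polynomial"
begin

definition smoothD :: "(real \<Rightarrow> real) \<Rightarrow> bool" where
 "smoothD f \<longleftrightarrow> (\<exists>D. D 0 = f \<and> (\<forall>k x. (D k has_real_derivative D (Suc k) x) (at x)))"

lemma smoothD_deriv_pow: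
  assumes "D 0 = f" "\<And>k x. (D k has_real_derivative D (Suc k) x) (at x)"
  shows "(deriv ^^ k) f = D k"
proof (induction k)
  case 0 then show ?case using assms(1) by simp
next
  case (Suc k)
  then show ?case by (auto intro!: ext DERIV_imp_deriv assms(2))
qed

lemma smoothD_diffble:
  assumes "smoothD f" shows "(deriv ^^ k) f differentiable (at x)"
proof -
  obtain D where D: "D 0 = f" "\<And>k x. (D k has_real_derivative D (Suc k) x) (at x)"
    using assms unfolding smoothD_def by blast
  show ?thesis using smoothD_deriv_pow[OF D, of k] D(2)[of k x]
    by (auto simp: real_differentiable_def)
qed

lemma smoothD_has_deriv:
  assumes "smoothD f" shows "(f has_real_derivative deriv f x) (at x)"
  using smoothD_diffble[OF assms, of 0 x] by (simp add: DERIV_deriv_iff_real_differentiable)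

lemma smoothD_deriv: assumes "smoothD f" shows "smoothD (deriv f)"
proof -
  obtain D where D: "D 0 = f" "\<And>k x. (D k has_real_derivative D (Suc k) x) (at x)"
    using assms unfolding smoothD_def by blast
  have "deriv f = D 1" using smoothD_deriv_pow[OF D, of 1] by simp
  then show ?thesis unfolding smoothD_def
    by (intro exI[of _ "\<lambda>k. D (Suc k)"]) (auto intro: D)
qed

lemma smoothD_cont: assumes "smoothD f" shows "continuous_on S f"
  using smoothD_has_deriv[OF assms]
  by (meson DERIV_isCont continuous_at_imp_continuous_on)

lemma smoothD_affine:
  assumes "smoothD f" shows "smoothD (\<lambda>x. f (a*x+b))"
proof -
  obtain D where D: "D 0 = f" "\<And>k x. (D k has_real_derivative D (Suc k) x) (at x)"
    using assms unfolding smoothD_def by blast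
  have "((\<lambda>x. a^k * D k (a*x+b)) has_real_derivative a^(Suc k) * D (Suc k) (a*x+b)) (at x)" for k x
  proof -
    have "((\<lambda>x. D k (a*x+b)) has_real_derivative D (Suc k) (a*x+b) * a) (at x)"
      by (rule DERIV_chain2[OF D(2)]) (auto intro!: derivative_eq_intros)
    then show ?thesis by (auto intro!: derivative_eq_intros)
  qed
  then show ?thesis unfolding smoothD_def
    by (intro exI[of _ "\<lambda>k x. a^k * D k (a*x+b)"]) (auto simp: D(1))
qed

lemma smoothD_lin:
  assumes "smoothD f" "smoothD g" shows "smoothD (\<lambda>x. c * f x + e * g x)"
proof -
  obtain D where D: "D 0 = f" "\<And>k x. (D k has_real_derivative D (Suc k) x) (at x)"
    using assms unfolding smoothD_def by blast
  obtain E where E: "E 0 = g" "\<And>k x. (E k has_real_derivative E (Suc k) x) (at x)"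
    using assms unfolding smoothD_def by blast
  show ?thesis unfolding smoothD_def
    by (intro exI[of _ "\<lambda>k x. c * D k x + e * E k x"])
       (auto simp: D(1) E(1) intro!: derivative_eq_intros D(2) E(2))
qed

lemma smoothD_antideriv:
  assumes "smoothD f" "\<And>x. x \<le> c \<Longrightarrow> f x = 0"
  shows "smoothD (\<lambda>x. integral {c..x} f)"
    and "((\<lambda>x. integral {c..x} f) has_real_derivative f x) (at x)"
proof -
  have cont: "continuous_on S f" for S using smoothD_cont[OF assms(1)] .
  have eq: "integral {c..t} f = integral {A..t} f" if "A \<le> c" for A t
  proof (cases "t \<le> c")
    case True
    have "integral {A..t} f = integral {A..t} (\<lambda>x. 0)"
      by (rule integral_cong) (use True assms(2) in auto)
    moreover have "integral {c..t} f = integral {c..t} (\<lambda>x. 0)"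
      by (rule integral_cong) (use True assms(2) in auto)
    ultimately show ?thesis by simp
  next
    case False
    have "integral {A..c} f + integral {c..t} f = integral {A..t} f"
      using Henstock_Kurzweil_Integration.integral_combine[of A c t f] False that integrable_continuous_real[OF cont] by auto
    moreover have "integral {A..c} f = integral {A..c} (\<lambda>x. 0)"
      by (rule integral_cong) (use assms(2) in auto)
    ultimately show ?thesis by simp
  qed
  have der: "((\<lambda>x. integral {c..x} f) has_real_derivative f x) (at x)" for x
  proof -
    define A where "A = min c (x-1)"
    define B where "B = x+1"
    have "((\<lambda>u. integral {A..u} f) has_vector_derivative f x) (at x within {A..B})"
      by (rule integral_has_vector_derivative[OF cont]) (auto simp: A_def B_def)
    then have "((\<lambda>u. integral {A..u} f) has_vector_derivative f x) (at x)"
      by (subst (asm) at_within_interior) (auto simp: A_def B_def)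
    moreover have "(\<lambda>u. integral {A..u} f) = (\<lambda>x. integral {c..x} f)"
      using eq[of A] by (auto simp: A_def)
    ultimately show ?thesis by (simp add: has_real_derivative_iff_has_vector_derivative)
  qed
  then show "((\<lambda>x. integral {c..x} f) has_real_derivative f x) (at x)" .
  obtain D where D: "D 0 = f" "\<And>k x. (D k has_real_derivative D (Suc k) x) (at x)"
    using assms unfolding smoothD_def by blast
  show "smoothD (\<lambda>x. integral {c..x} f)" unfolding smoothD_def
    apply (intro exI[of _ "\<lambda>k. case k of 0 \<Rightarrow> (\<lambda>x. integral {c..x} f) | Suc j \<Rightarrow> D j"])
    using der D by (auto split: nat.split)
qed

definition gcls :: "real poly \<Rightarrow> nat \<Rightarrow> real \<Rightarrow> real" where
  "gcls p m x = (if 0 < x \<and> x < 1 then poly p x * exp (-1/(x*(1-x))) / (x*(1-x))^m else 0)"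

definition nextp :: "real poly \<Rightarrow> nat \<Rightarrow> real poly" where
  "nextp p m = pderiv p * [:0,1,-1:]^2 - smult (real m) (p * [:1,-2:] * [:0,1,-1:]) + p * [:1,-2:]"

lemma alg: "(w::real) > 0 \<Longrightarrow> ((P' * E + E * (c/w^2) * P) * w^m - P * E * (real m * w^m * c / w)) / (w^m * w^m)
   = (P'*w^2 - real m * (P*c*w) + P*c) * E / w^(m+2)"
  by (simp add: field_simps power2_eq_square power_add)

lemma gcls_deriv_interior:
  assumes x: "0 < x" "x < 1"
  shows "(gcls p m has_real_derivative gcls (nextp p m) (m+2) x) (at x)"
proof -
  define w where "w = x*(1-x)"
  have w0: "w > 0" using x by (simp add: w_def)
  have e: "((\<lambda>t. exp(-1/(t*(1-t)))) has_real_derivative exp(-1/w) * ((1-2*x)/w^2)) (at x)"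
    using w0 unfolding w_def
    apply (auto intro!: derivative_eq_intros)
    apply (simp add: divide_simps power2_eq_square)
    apply (simp add: algebra_simps)
    done
  have pw: "((\<lambda>t. (t*(1-t))^m) has_real_derivative real m * w^m * (1-2*x)/w) (at x)"
  proof (cases m)
    case 0 then show ?thesis by simp
  next
    case (Suc k)
    have "((\<lambda>t. (t*(1-t))^m) has_real_derivative real m * w^k * (1-2*x)) (at x)"
    proof -
      have d: "((\<lambda>t. t*(1-t)) has_real_derivative 1 - 2*x) (at x)"
        by (auto intro!: derivative_eq_intros)
      show ?thesis using DERIV_power[OF d, of m] Suc unfolding w_def by (simp add: mult_ac)
    qed
    moreover have "real m * w^k * (1-2*x) = real m * w^m * (1-2*x)/w"
      using Suc w0 by simp
    ultimately show ?thesis by simp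
  qed
  have pd: "(poly p has_real_derivative poly (pderiv p) x) (at x)" by (rule poly_DERIV)
  have wx: "x*(1-x) = w" by (simp add: w_def)
  have "((\<lambda>t. poly p t * exp (-1/(t*(1-t))) / (t*(1-t))^m) has_real_derivative
     ((poly (pderiv p) x * exp (-1/(x*(1-x))) + exp(-1/w) * ((1-2*x)/w^2) * poly p x) * (x*(1-x))^m
       - poly p x * exp (-1/(x*(1-x))) * (real m * w^m * (1-2*x)/w)) / ((x*(1-x))^m * (x*(1-x))^m)) (at x)"
    by (rule DERIV_divide[OF DERIV_mult[OF pd e] pw]) (use w0 in \<open>simp add: wx\<close>)
  moreover have "((poly (pderiv p) x * exp (-1/(x*(1-x))) + exp(-1/w) * ((1-2*x)/w^2) * poly p x) * (x*(1-x))^m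
       - poly p x * exp (-1/(x*(1-x))) * (real m * w^m * (1-2*x)/w)) / ((x*(1-x))^m * (x*(1-x))^m)
     = poly (nextp p m) x * exp (-1/w) / w^(m+2)"
  proof -
    have pn: "poly (nextp p m) x = poly (pderiv p) x * w^2 - real m * (poly p x * (1-2*x) * w) + poly p x * (1-2*x)"
      by (simp add: nextp_def w_def algebra_simps power2_eq_square)
    show ?thesis unfolding wx pn using alg[OF w0] by simp
  qed
  ultimately have "((\<lambda>t. poly p t * exp (-1/(t*(1-t))) / (t*(1-t))^m) has_real_derivative
       gcls (nextp p m) (m+2) x) (at x)"
    using x by (simp add: gcls_def w_def)
  then show ?thesis
    by (rule has_field_derivative_transform_within_open[where S="{0<..<1}"]) (use x in \<open>auto simp: gcls_def\<close>)
qed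

lemma lim0: "((\<lambda>t. (1/t)^k * exp(-1/t)) \<longlongrightarrow> (0::real)) (at_right 0)"
proof -
  have "((\<lambda>t. (inverse t)^k / exp (inverse t)) \<longlongrightarrow> (0::real)) (at_right 0)"
    using filterlim_compose[OF tendsto_power_div_exp_0 filterlim_inverse_at_top_right] by simp
  moreover have "(\<lambda>t. (inverse t)^k / exp (inverse t)) = (\<lambda>t::real. (1/t)^k * exp(-1/t))"
    by (auto simp: exp_minus field_simps)
  ultimately show ?thesis by simp
qed

lemma lim0c: assumes "filterlim w (at_right 0) F"
  shows "((\<lambda>h. C * (1/w h)^k * exp(-1/w h)) \<longlongrightarrow> (0::real)) F"
  using tendsto_mult[OF tendsto_const[of C] filterlim_compose[OF lim0 assms]] by (simp add: mult.assoc)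

lemma poly_bound01: fixes p :: "real poly" obtains C where "C \<ge> 0" "\<And>x. x \<in> {0..1} \<Longrightarrow> \<bar>poly p x\<bar> \<le> C"
proof -
  have "continuous_on {0..1::real} (poly p)" by (intro continuous_intros)
  then show ?thesis using continuous_on_compact_bound[of "{0..1::real}" "poly p"] that by auto
qed

lemma gcls_bound:
  assumes "C \<ge> 0" "\<And>x. x \<in> {0..1} \<Longrightarrow> \<bar>poly p x\<bar> \<le> C" "0 < x" "x < 1" "w \<le> \<bar>d\<bar>" "w = x*(1-x)"
  shows "\<bar>gcls p m x / d\<bar> \<le> C * (1/w)^(m+1) * exp(-1/w)"
proof -
  have w0: "w > 0" using assms by simp
  have d0: "\<bar>d\<bar> > 0" using w0 assms by linarith
  have "\<bar>gcls p m x / d\<bar> = \<bar>poly p x\<bar> * exp(-1/w) / (w^m * \<bar>d\<bar>)"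
    using assms w0 by (simp add: gcls_def abs_mult)
  also have "\<dots> \<le> C * exp(-1/w) / (w^m * w)"
    by (rule frac_le) (use assms w0 d0 in \<open>auto intro!: mult_right_mono mult_left_mono\<close>)
  also have "\<dots> = C * (1/w)^(m+1) * exp(-1/w)"
    using w0 by (simp add: field_simps power_add)
  finally show ?thesis .
qed

lemma gcls_deriv0: "(gcls p m has_real_derivative 0) (at 0)"
proof -
  obtain C where C: "C \<ge> 0" "\<And>x. x \<in> {0..1} \<Longrightarrow> \<bar>poly p x\<bar> \<le> C" using poly_bound01 by blast
  have wlim: "filterlim (\<lambda>h::real. h*(1-h)) (at_right 0) (at_right 0)"
    unfolding filterlim_at
  proof
    show "\<forall>\<^sub>F x in at_right (0::real). x * (1 - x) \<in> {0<..} \<and> x * (1 - x) \<noteq> 0"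
      unfolding eventually_at_right_field by (intro exI[of _ 1]) auto
    show "((\<lambda>x. x * (1 - x)) \<longlongrightarrow> 0) (at_right (0::real))"
      by (rule tendsto_eq_intros refl | simp)+
  qed
  have R: "((\<lambda>h. gcls p m h / h) \<longlongrightarrow> 0) (at_right 0)"
  proof (rule Lim_null_comparison[OF _ lim0c[OF wlim, of C "m+1"]])
    show "\<forall>\<^sub>F x in at_right 0. norm (gcls p m x / x) \<le> C * (1 / (x * (1 - x))) ^ (m + 1) * exp (- 1 / (x * (1 - x)))"
      unfolding eventually_at_right_field
    proof (intro exI[of _ 1] conjI allI impI)
      fix y :: real assume y: "0 < y" "y < 1"
      then have "y*(1-y) \<le> \<bar>y\<bar>" by (simp add: mult_le_cancel_left1)
      then show "norm (gcls p m y / y) \<le> C * (1 / (y * (1 - y))) ^ (m + 1) * exp (- 1 / (y * (1 - y)))"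
        using gcls_bound[OF C y, where d=y and w="y*(1-y)" and m=m] by simp
    qed simp
  qed
  have L: "((\<lambda>h. gcls p m h / h) \<longlongrightarrow> 0) (at_left 0)"
  proof -
    have "\<forall>\<^sub>F x in at_left 0. 0 = gcls p m x / x"
      unfolding eventually_at_left_field by (intro exI[of _ "-1"]) (auto simp: gcls_def)
    then show ?thesis by (rule Lim_transform_eventually[OF tendsto_const])
  qed
  have "((\<lambda>h. gcls p m h / h) \<longlongrightarrow> 0) (at 0)"
    using L R by (simp add: filterlim_at_split)
  then show ?thesis unfolding DERIV_def by (simp add: gcls_def)
qed

lemma gcls_deriv1: "(gcls p m has_real_derivative 0) (at 1)"
proof -
  obtain C where C: "C \<ge> 0" "\<And>x. x \<in> {0..1} \<Longrightarrow> \<bar>poly p x\<bar> \<le> C" using poly_bound01 by blast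
  have wlim: "filterlim (\<lambda>h::real. (1+h)*(1-(1+h))) (at_right 0) (at_left 0)"
    unfolding filterlim_at
  proof
    show "\<forall>\<^sub>F x in at_left (0::real). (1+x) * (1 - (1+x)) \<in> {0<..} \<and> (1+x) * (1 - (1+x)) \<noteq> 0"
      unfolding eventually_at_left_field by (intro exI[of _ "-1"]) (auto simp: mult_pos_neg)
    show "((\<lambda>x. (1+x) * (1 - (1+x))) \<longlongrightarrow> 0) (at_left (0::real))"
      by (rule tendsto_eq_intros refl | simp)+
  qed
  have L: "((\<lambda>h. gcls p m (1+h) / h) \<longlongrightarrow> 0) (at_left 0)"
  proof (rule Lim_null_comparison[OF _ lim0c[OF wlim, of C "m+1"]])
    show "\<forall>\<^sub>F x in at_left 0. norm (gcls p m (1+x) / x) \<le> C * (1 / ((1+x) * (1 - (1+x)))) ^ (m + 1) * exp (- 1 / ((1+x) * (1 - (1+x))))"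
      unfolding eventually_at_left_field
    proof (intro exI[of _ "-1"] conjI allI impI)
      fix y :: real assume y: "-1 < y" "y < 0"
      then have y': "0 < 1+y" "1+y < 1" by auto
      have "(1+y)*(1-(1+y)) \<le> \<bar>y\<bar>" using y by (simp add: algebra_simps)
      then show "norm (gcls p m (1+y) / y) \<le> C * (1 / ((1+y) * (1 - (1+y)))) ^ (m + 1) * exp (- 1 / ((1+y) * (1 - (1+y))))"
        using gcls_bound[OF C y', where d=y and w="(1+y)*(1-(1+y))" and m=m] by simp
    qed simp
  qed
  have R: "((\<lambda>h. gcls p m (1+h) / h) \<longlongrightarrow> 0) (at_right 0)"
  proof -
    have "\<forall>\<^sub>F x in at_right 0. 0 = gcls p m (1+x) / x"
      unfolding eventually_at_right_field by (intro exI[of _ "1"]) (auto simp: gcls_def)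
    then show ?thesis by (rule Lim_transform_eventually[OF tendsto_const])
  qed
  have "((\<lambda>h. gcls p m (1+h) / h) \<longlongrightarrow> 0) (at 0)"
    using L R by (simp add: filterlim_at_split)
  then show ?thesis unfolding DERIV_def by (simp add: gcls_def)
qed

lemma gcls_deriv: "(gcls p m has_real_derivative gcls (nextp p m) (m+2) x) (at x)"
proof -
  consider "x < 0" | "x = 0" | "0 < x \<and> x < 1" | "x = 1" | "x > 1" by linarith
  then show ?thesis
  proof cases
    case 1
    have "((\<lambda>x. 0) has_real_derivative 0) (at x)" by simp
    then have "(gcls p m has_real_derivative 0) (at x)"
      by (rule has_field_derivative_transform_within_open[where S="{..<0}"]) (use 1 in \<open>auto simp: gcls_def\<close>)
    then show ?thesis using 1 by (simp add: gcls_def)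
  next
    case 2 then show ?thesis using gcls_deriv0 by (simp add: gcls_def)
  next
    case 3 then show ?thesis using gcls_deriv_interior by blast
  next
    case 4 then show ?thesis using gcls_deriv1 by (simp add: gcls_def)
  next
    case 5
    have "((\<lambda>x. 0) has_real_derivative 0) (at x)" by simp
    then have "(gcls p m has_real_derivative 0) (at x)"
      by (rule has_field_derivative_transform_within_open[where S="{1<..}"]) (use 5 in \<open>auto simp: gcls_def\<close>)
    then show ?thesis using 5 by (simp add: gcls_def)
  qed
qed

primrec pmseq :: "nat \<Rightarrow> real poly \<times> nat" where
  "pmseq 0 = (1, 0)"
| "pmseq (Suc k) = (nextp (fst (pmseq k)) (snd (pmseq k)), snd (pmseq k) + 2)"

definition hb :: "real \<Rightarrow> real" where "hb = gcls 1 0"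

lemma smoothD_hb: "smoothD hb"
  unfolding smoothD_def hb_def
  by (intro exI[of _ "\<lambda>k. gcls (fst (pmseq k)) (snd (pmseq k))"]) (auto, metis gcls_deriv add_2_eq_Suc')

lemma hb_nonneg: "hb x \<ge> 0" by (simp add: hb_def gcls_def)
lemma hb_pos: "0 < x \<Longrightarrow> x < 1 \<Longrightarrow> hb x > 0" by (simp add: hb_def gcls_def)
lemma hb_zero: "x \<le> 0 \<or> x \<ge> 1 \<Longrightarrow> hb x = 0" by (auto simp: hb_def gcls_def)

lemma smoothD_cmult: "smoothD f \<Longrightarrow> smoothD (\<lambda>x. c * f x)"
  using smoothD_lin[of f f c 0] by simp

lemma smoothD_diff: "smoothD f \<Longrightarrow> smoothD g \<Longrightarrow> smoothD (\<lambda>x. f x - g x)"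
  using smoothD_lin[of f g 1 "-1"] by simp

definition ramp :: "(real \<Rightarrow> real) \<Rightarrow> real \<Rightarrow> real" where
  "ramp f s = integral {0..s} f / integral {0..1} f"

locale rampf =
  fixes f :: "real \<Rightarrow> real"
  assumes sm: "smoothD f" and z: "\<And>x. x \<le> 0 \<or> x \<ge> 1 \<Longrightarrow> f x = 0"
    and nn: "\<And>x. f x \<ge> 0" and ipos: "integral {0..1} f > 0"
begin

lemma cont: "continuous_on S f" using smoothD_cont[OF sm] .
lemma intg: "f integrable_on {a..b}" by (rule integrable_continuous_real[OF cont])

lemma smooth: "smoothD (ramp f)"
proof -
  have "smoothD (\<lambda>x. integral {0..x} f)" using smoothD_antideriv(1)[OF sm] z by auto
  then have "smoothD (\<lambda>x. (1/integral {0..1} f) * integral {0..x} f)" by (rule smoothD_cmult)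
  then show ?thesis unfolding ramp_def[abs_def] by simp
qed

lemma der: "(ramp f has_real_derivative f x / integral {0..1} f) (at x)"
proof -
  have "((\<lambda>x. integral {0..x} f) has_real_derivative f x) (at x)"
    using smoothD_antideriv(2)[OF sm] z by auto
  then show ?thesis unfolding ramp_def[abs_def] using ipos by (auto intro!: derivative_eq_intros)
qed

lemma low: "s \<le> 0 \<Longrightarrow> ramp f s = 0"
proof -
  assume s: "s \<le> 0"
  have "integral {0..s} f = integral {0..s} (\<lambda>x. 0)"
    by (rule integral_cong) (use s z in auto)
  then show ?thesis by (simp add: ramp_def)
qed

lemma high: "s \<ge> 1 \<Longrightarrow> ramp f s = 1"
proof -
  assume s: "s \<ge> 1"
  have "integral {0..1} f + integral {1..s} f = integral {0..s} f"
    using Henstock_Kurzweil_Integration.integral_combine[of 0 1 s f] s intg by auto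
  moreover have "integral {1..s} f = integral {1..s} (\<lambda>x. 0)"
    by (rule integral_cong) (use s z in auto)
  ultimately show ?thesis using ipos by (simp add: ramp_def)
qed

lemma nonneg: "ramp f s \<ge> 0"
  unfolding ramp_def using ipos by (intro divide_nonneg_pos integral_nonneg intg nn) auto

lemma le1: "ramp f s \<le> 1"
proof (cases "s \<le> 1")
  case True
  have "integral {0..s} f \<le> integral {0..1} f"
    by (rule integral_subset_le) (use True in \<open>auto intro: intg nn\<close>)
  then show ?thesis using ipos by (simp add: ramp_def)
next
  case False then show ?thesis using high by simp
qed

end

lemma hb_int_pos: "integral {0..1} hb > 0"
proof -
  have c: "continuous_on S hb" for S using smoothD_cont[OF smoothD_hb] .
  have ge: "integral {0..1} hb \<ge> 0" by (intro integral_nonneg integrable_continuous_real c hb_nonneg)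
  moreover have "integral {0..1} hb \<noteq> 0"
  proof
    assume "integral {0..1} hb = 0"
    then have "(hb has_integral 0) (cbox 0 1)"
      using integrable_continuous_real[OF c, of 0 1] by (metis cbox_interval has_integral_integral)
    then have "hb (1/2) = 0"
      by (intro has_integral_0_cbox_imp_0[of 0 1 hb]) (auto simp: c hb_nonneg)
    then show False using hb_pos[of "1/2"] by simp
  qed
  ultimately show ?thesis by simp
qed

interpretation Rh: rampf hb
  by unfold_locales (auto simp: smoothD_hb hb_zero hb_nonneg hb_int_pos)


definition Pl :: "real \<Rightarrow> real" where "Pl t = ramp hb (8*t) - ramp hb (8*t - 7)"

lemma Pl_smooth: "smoothD Pl"
proof -
  have "smoothD (\<lambda>t. ramp hb (8*t + 0))" by (rule smoothD_affine[OF Rh.smooth])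
  moreover have "smoothD (\<lambda>t. ramp hb (8*t + -7))" by (rule smoothD_affine[OF Rh.smooth])
  ultimately show ?thesis unfolding Pl_def[abs_def] using smoothD_diff by simp
qed

lemma Pl_zero: "t \<le> 0 \<or> t \<ge> 1 \<Longrightarrow> Pl t = 0"
  unfolding Pl_def using Rh.low Rh.high by auto

lemma Pl_one: "1/8 \<le> t \<Longrightarrow> t \<le> 7/8 \<Longrightarrow> Pl t = 1"
  unfolding Pl_def using Rh.low Rh.high by auto

lemma Pl_nonneg: "Pl t \<ge> 0"
  unfolding Pl_def using Rh.low Rh.high Rh.nonneg Rh.le1
  by (cases "8*t - 7 \<le> 0") auto

lemma Pl_le1: "Pl t \<le> 1"
  unfolding Pl_def using Rh.low Rh.high Rh.nonneg Rh.le1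
  by (cases "8*t - 7 \<le> 0") auto

lemma Pl_cont: "continuous_on S Pl" using smoothD_cont[OF Pl_smooth] .

lemma Pl_int: "integral {0..1} Pl \<ge> 3/4"
proof -
  have "integral {1/8..7/8} Pl \<le> integral {0..1} Pl"
    by (rule integral_subset_le) (auto intro: integrable_continuous_real Pl_cont Pl_nonneg)
  moreover have "integral {1/8..7/8} Pl = integral {1/8..7/8::real} (\<lambda>x. 1)"
    by (rule integral_cong) (auto simp: Pl_one)
  ultimately show ?thesis by simp
qed

interpretation RP: rampf Pl
  using Pl_int by unfold_locales (auto simp: Pl_smooth Pl_zero Pl_nonneg)

definition cP :: real where "cP = integral {0..1} Pl"

lemma cP_ge: "cP \<ge> 3/4" using Pl_int by (simp add: cP_def)

definition phi :: "real \<Rightarrow> real \<Rightarrow> real \<Rightarrow> real \<Rightarrow> real" where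
  "phi a0 L b0 x = ramp Pl ((x - a0)/L) - ramp Pl ((x - b0)/L)"

lemma ramp_aff_der:
  assumes "L > 0"
  shows "((\<lambda>x. ramp Pl ((x - a)/L)) has_real_derivative Pl ((x-a)/L) / (cP * L)) (at x)"
proof -
  have "((\<lambda>x. ramp Pl ((x - a)/L)) has_real_derivative Pl ((x-a)/L) / cP * (1/L)) (at x)"
    by (rule DERIV_chain2[OF RP.der[folded cP_def]]) (use assms in \<open>auto intro!: derivative_eq_intros\<close>)
  then show ?thesis by simp
qed

context
  fixes a0 L b0 :: real
  assumes L: "L > 0" and ab: "a0 + L \<le> b0"
begin

lemma phi_smooth: "smoothD (phi a0 L b0)"
proof -
  have e: "(\<lambda>x. (x - a)/L) = (\<lambda>x. (1/L)*x + (-a/L))" for a using L by (auto simp: field_simps)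
  have "smoothD (\<lambda>x. ramp Pl ((1/L)*x + (-a/L)))" for a by (rule smoothD_affine[OF RP.smooth])
  then have "smoothD (\<lambda>x. ramp Pl ((x - a)/L))" for a
    using e[of a] by (metis (no_types, lifting) ext)
  then show ?thesis unfolding phi_def[abs_def] by (intro smoothD_diff)
qed

lemma phi_zero: "x \<le> a0 \<or> x \<ge> b0 + L \<Longrightarrow> phi a0 L b0 x = 0"
proof -
  assume x: "x \<le> a0 \<or> x \<ge> b0 + L"
  show ?thesis
  proof (cases "x \<le> a0")
    case True
    then have "(x - a0)/L \<le> 0" "(x-b0)/L \<le> 0" using L ab by (auto simp: divide_le_0_iff)
    then show ?thesis by (simp add: phi_def RP.low)
  next
    case False
    then have "(x - a0)/L \<ge> 1" "(x-b0)/L \<ge> 1" using L ab x by (auto simp: field_simps)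
    then show ?thesis by (simp add: phi_def RP.high)
  qed
qed

lemma phi_one: "a0 + L \<le> x \<Longrightarrow> x \<le> b0 \<Longrightarrow> phi a0 L b0 x = 1"
proof -
  assume x: "a0 + L \<le> x" "x \<le> b0"
  then have "(x - a0)/L \<ge> 1" "(x-b0)/L \<le> 0" using L by (auto simp: field_simps divide_le_0_iff)
  then show ?thesis by (simp add: phi_def RP.low RP.high)
qed

lemma phi_nonneg: "phi a0 L b0 x \<ge> 0"
proof (cases "x \<le> b0")
  case True
  then have "(x-b0)/L \<le> 0" using L by (auto simp: divide_le_0_iff)
  then show ?thesis by (simp add: phi_def RP.low RP.nonneg)
next
  case False
  then have "(x - a0)/L \<ge> 1" using L ab by (auto simp: field_simps)
  then show ?thesis by (simp add: phi_def RP.high RP.le1)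
qed

lemma phi_le1: "phi a0 L b0 x \<le> 1"
proof (cases "x \<le> b0")
  case True
  then have "(x-b0)/L \<le> 0" using L by (auto simp: divide_le_0_iff)
  then show ?thesis by (simp add: phi_def RP.low RP.le1)
next
  case False
  then have "(x - a0)/L \<ge> 1" using L ab by (auto simp: field_simps)
  then show ?thesis by (simp add: phi_def RP.high RP.nonneg)
qed

definition psi :: "real \<Rightarrow> real \<Rightarrow> real" where "psi a x = Pl ((x-a)/L) / (cP * L)"

lemma phi_der: "(phi a0 L b0 has_real_derivative psi a0 x - psi b0 x) (at x)"
  unfolding phi_def[abs_def] psi_def
  by (intro DERIV_diff ramp_aff_der L)

lemma phi_deriv: "deriv (phi a0 L b0) x = psi a0 x - psi b0 x"
  by (rule DERIV_imp_deriv[OF phi_der])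

lemma psi_nonneg: "psi a x \<ge> 0" using cP_ge L by (simp add: psi_def Pl_nonneg)
lemma psi_le: "psi a x \<le> (4/3) / L"
proof -
  have "psi a x \<le> 1 / (cP * L)"
    unfolding psi_def using cP_ge L Pl_le1 by (intro divide_right_mono) auto
  also have "\<dots> \<le> (4/3)/L" using cP_ge L by (simp add: field_simps)
  finally show ?thesis .
qed

lemma psi_disj: "psi a0 x * psi b0 x = 0"
proof (cases "Pl ((x-a0)/L) = 0")
  case False
  then have "(x-a0)/L < 1" using Pl_zero[of "(x-a0)/L"] by linarith
  then have "x < b0" using L ab by (simp add: field_simps)
  then have "(x-b0)/L \<le> 0" using L by (simp add: divide_le_0_iff)
  then show ?thesis by (simp add: psi_def Pl_zero)
qed (simp add: psi_def)

lemma psi_int: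
  assumes "0 \<le> a" "a + L \<le> 1"
  shows "(psi a has_integral 1) {0..1}"
proof -
  have "(psi a has_integral (ramp Pl ((1-a)/L) - ramp Pl ((0-a)/L))) {0..1}"
    by (rule fundamental_theorem_of_calculus)
       (auto simp: has_real_derivative_iff_has_vector_derivative[symmetric]
          intro!: DERIV_subset[OF ramp_aff_der[OF L, folded psi_def]])
  moreover have "(1-a)/L \<ge> 1" "(0-a)/L \<le> 0" using assms L by (auto simp: field_simps divide_le_0_iff)
  ultimately show ?thesis by (simp add: RP.low RP.high)
qed

lemma phi_cont_deriv: "continuous_on S (deriv (phi a0 L b0))"
  using smoothD_cont[OF smoothD_deriv[OF phi_smooth]] .

lemma phi_energy:
  assumes "0 \<le> a0" "b0 + L \<le> 1"
  shows "integral {0..1} (\<lambda>x. (deriv (phi a0 L b0) x)^2) \<le> 8 / (3*L)"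
proof -
  have i1: "(psi a0 has_integral 1) {0..1}" using psi_int assms ab L by auto
  have i2: "(psi b0 has_integral 1) {0..1}" using psi_int assms ab L by auto
  have "((\<lambda>x. (4/3)/L * (psi a0 x + psi b0 x)) has_integral (4/3)/L * (1 + 1)) {0..1}"
    by (intro has_integral_mult_right has_integral_add i1 i2)
  moreover have "((\<lambda>x. (deriv (phi a0 L b0) x)^2) has_integral integral {0..1} (\<lambda>x. (deriv (phi a0 L b0) x)^2)) {0..1}"
    by (intro integrable_integral integrable_continuous_real continuous_intros phi_cont_deriv)
  moreover have "(deriv (phi a0 L b0) x)^2 \<le> (4/3)/L * (psi a0 x + psi b0 x)" for x
  proof -
    have "(deriv (phi a0 L b0) x)^2 = (psi a0 x)^2 + (psi b0 x)^2"
      using psi_disj[of x] by (simp add: phi_deriv power2_diff)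
    also have "\<dots> \<le> (4/3)/L * psi a0 x + (4/3)/L * psi b0 x"
      using psi_le psi_nonneg unfolding power2_eq_square
      by (intro add_mono mult_right_mono) auto
    finally show ?thesis by (simp add: distrib_left)
  qed
  ultimately have "integral {0..1} (\<lambda>x. (deriv (phi a0 L b0) x)^2) \<le> (4/3)/L * (1 + 1)"
    using has_integral_le by blast
  then show ?thesis by simp
qed

end

lemma L2_01_set_integrable: "L2_01 f \<Longrightarrow> set_integrable lborel {0..1} (\<lambda>x. (f x)^2)"
  unfolding L2_01_def set_integrable_def by simp

lemma cont_set_integrable: fixes f :: "real \<Rightarrow> real" shows "continuous_on {0..1} f \<Longrightarrow> set_integrable lborel {0..1::real} f"
  unfolding set_integrable_def using borel_integrable_compact[of "{0..1::real}" f] by auto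

lemma set_integrable_sq_diff:
  fixes f g :: "real \<Rightarrow> real"
  assumes "set_integrable lborel {0..1} (\<lambda>x. (f x)^2)" "set_integrable lborel {0..1} (\<lambda>x. (g x)^2)"
    "f \<in> borel_measurable lborel" "g \<in> borel_measurable lborel"
  shows "set_integrable lborel {0..1} (\<lambda>x. (f x - g x)^2)"
proof -
  have i: "integrable lborel (\<lambda>x. 2*(indicator {0..1} x * (f x)^2) + 2*(indicator {0..1} x * (g x)^2))"
    using assms(1,2) unfolding set_integrable_def
    by (auto intro!: Bochner_Integration.integrable_add integrable_mult_right)
  show ?thesis unfolding set_integrable_def
  proof (rule Bochner_Integration.integrable_bound[OF i])
    show "(\<lambda>x. indicator {0..1} x *\<^sub>R (f x - g x)\<^sup>2) \<in> borel_measurable lborel"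
      using assms(3,4) by measurable
    show "AE x in lborel. norm (indicator {0..1} x *\<^sub>R (f x - g x)\<^sup>2) \<le> norm (2*(indicator {0..1} x * (f x)^2) + 2*(indicator {0..1} x * (g x)^2))"
    proof (rule AE_I2)
      fix x
      have "(f x - g x)^2 \<le> 2*(f x)^2 + 2*(g x)^2" using zero_le_square[of "f x + g x"] by (simp add: power2_eq_square algebra_simps)
      then show "norm (indicator {0..1} x *\<^sub>R (f x - g x)\<^sup>2) \<le> norm (2*(indicator {0..1} x * (f x)^2) + 2*(indicator {0..1} x * (g x)^2))"
        by (auto simp: indicator_def)
    qed
  qed
qed


lemma sc_props:
  assumes "smooth_compact A B f" "0 < A"
  shows "(f has_real_derivative deriv f x) (at x)" "continuous_on S (deriv f)" "continuous_on S f" "f 0 = 0"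
proof -
  have all: "\<forall>k x. (deriv ^^ k) f differentiable (at x)" using assms(1) unfolding smooth_compact_def by blast
  have d0: "f differentiable (at x)" for x using all[rule_format, of 0 x] by simp
  have d1: "deriv f differentiable (at x)" for x using all[rule_format, of 1 x] by simp
  show "(f has_real_derivative deriv f x) (at x)" using d0 by (simp add: DERIV_deriv_iff_real_differentiable)
  show "continuous_on S (deriv f)" using d1
    by (meson continuous_at_imp_continuous_on differentiable_imp_continuous_within)
  show "continuous_on S f" using d0
    by (meson continuous_at_imp_continuous_on differentiable_imp_continuous_within)
  obtain c d where "A < c" "\<forall>x. x \<notin> {c..d} \<longrightarrow> f x = 0" using assms(1) unfolding smooth_compact_def by blast
  then show "f 0 = 0" using assms(2) by auto
qed


lemma sc_bound:
  assumes "smooth_compact A B f" "0 < A" "x \<in> {0..1}"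
  shows "\<bar>f x\<bar> \<le> 1/2 + (LINT t:{0..1}|lborel. (deriv f t)^2) / 2"
proof -
  note P = sc_props[OF assms(1,2)]
  have cd: "continuous_on S (deriv f)" for S by (rule P(2))
  have ci: "(\<lambda>t. (deriv f t)^2) integrable_on {a..b}" for a b
    by (intro integrable_continuous_real continuous_intros cd)
  have dv: "(f has_vector_derivative deriv f t) (at t within {0..x})" for t
    using has_field_derivative_at_within[OF P(1)[of t]] by (simp add: has_real_derivative_iff_has_vector_derivative[symmetric])
  have "(deriv f has_integral (f x - f 0)) {0..x}"
    by (rule fundamental_theorem_of_calculus) (use assms(3) dv in auto)
  then have fx: "f x = integral {0..x} (deriv f)" using P(4) by (simp add: integral_unique)
  define G where "G = (\<lambda>t. 1/2 + (1/2)*(deriv f t)^2)"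
  have g1: "(G has_integral (1/2 + (1/2) * integral {0..1} (\<lambda>t. (deriv f t)^2))) {0..1}"
    unfolding G_def
    using has_integral_add[OF has_integral_const_real[of "1/2" 0 1] has_integral_mult_right[OF integrable_integral[OF ci[of 0 1]], of "1/2"]]
    by simp
  have gi: "G integrable_on {a..b}" for a b
    unfolding G_def by (intro integrable_continuous_real continuous_intros cd)
  have Gnn: "G t \<ge> 0" for t unfolding G_def by simp
  have b1: "norm (integral {0..x} (deriv f)) \<le> integral {0..x} G"
  proof (rule integral_norm_bound_integral)
    show "deriv f integrable_on {0..x}" by (intro integrable_continuous_real cd)
    show "G integrable_on {0..x}" by (rule gi)
    fix t
    show "norm (deriv f t) \<le> G t"
      unfolding G_def real_norm_def
      using zero_le_square[of "\<bar>deriv f t\<bar> - 1"] by (simp add: power2_eq_square algebra_simps)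
  qed
  have b2: "integral {0..x} G \<le> integral {0..1} G"
    by (rule integral_subset_le) (use assms(3) gi Gnn in auto)
  have b3: "integral {0..1} G = 1/2 + (1/2) * integral {0..1} (\<lambda>t. (deriv f t)^2)"
    using g1 by (simp add: integral_unique)
  have b4: "integral {0..1} (\<lambda>t. (deriv f t)^2) = (LINT t:{0..1}|lborel. (deriv f t)^2)"
    by (rule set_borel_integral_eq_integral(2)[symmetric])
       (intro cont_set_integrable continuous_intros cd)
  show ?thesis using b1 b2 b3 b4 fx by simp
qed


lemma cont_meas: "continuous_on UNIV (f::real\<Rightarrow>real) \<Longrightarrow> f \<in> borel_measurable lborel"
  using borel_measurable_continuous_onI by simp

lemma const_int: "set_integrable lborel {0..1::real} (\<lambda>x. c::real)"
  by (rule cont_set_integrable) simp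

lemma const_LINT: "(LINT x:{0..1::real}|lborel. (c::real)) = c"
  by (subst set_integral_const) auto

lemma qint_bound:
  fixes q y g :: "real \<Rightarrow> real"
  assumes qb: "\<forall>x\<in>{0<..<1}. \<bar>q x\<bar> \<le> Qm" and Qm: "Qm \<ge> 0" and A: "0 < A"
    and W: "W0 A B y g" and gn: "L2_sq g \<le> 1"
  shows "(LINT x:{0..1}|lborel. q x * y x) \<le> Qm*(5/2) + Qm^2/2 + 1/2"
proof (cases "set_integrable lborel {0..1} (\<lambda>x. q x * y x)")
  case False
  then have "(LINT x:{0..1}|lborel. q x * y x) = 0"
    unfolding set_lebesgue_integral_def set_integrable_def by (simp add: not_integrable_integral_eq)
  then show ?thesis using Qm by simp
next
  case SI: True
  obtain \<phi> where phs: "\<forall>k. smooth_compact A B (\<phi> k)"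
    and l1: "(\<lambda>k. L2_sq (\<lambda>x. \<phi> k x - y x)) \<longlonglongrightarrow> 0"
    and l2: "(\<lambda>k. L2_sq (\<lambda>x. deriv (\<phi> k) x - g x)) \<longlonglongrightarrow> 0"
    using W unfolding W0_def by blast
  have Ly: "L2_01 y" and Lg: "L2_01 g" using W unfolding W0_def by auto
  have e1: "eventually (\<lambda>k. L2_sq (\<lambda>x. \<phi> k x - y x) < 1) sequentially"
    using order_tendstoD(2)[OF l1] by simp
  have e2: "eventually (\<lambda>k. L2_sq (\<lambda>x. deriv (\<phi> k) x - g x) < 1) sequentially"
    using order_tendstoD(2)[OF l2] by simp
  obtain k where k1: "L2_sq (\<lambda>x. \<phi> k x - y x) < 1" and k2: "L2_sq (\<lambda>x. deriv (\<phi> k) x - g x) < 1"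
    using eventually_conj[OF e1 e2] unfolding eventually_sequentially by auto
  define f where "f = \<phi> k"
  have sc: "smooth_compact A B f" using phs by (simp add: f_def)
  note P = sc_props[OF sc A]
  have mf: "f \<in> borel_measurable lborel" by (intro cont_meas P(3))
  have mdf: "deriv f \<in> borel_measurable lborel" by (intro cont_meas P(2))
  have my: "y \<in> borel_measurable lborel" and mg: "g \<in> borel_measurable lborel"
    using Ly Lg unfolding L2_01_def by auto
  have I1: "set_integrable lborel {0..1} (\<lambda>x. (deriv f x)^2)"
    by (intro cont_set_integrable continuous_intros P(2))
  have I2: "set_integrable lborel {0..1} (\<lambda>x. (g x)^2)" by (rule L2_01_set_integrable[OF Lg])
  have I3: "set_integrable lborel {0..1} (\<lambda>x. (deriv f x - g x)^2)"
    by (rule set_integrable_sq_diff[OF I1 I2 mdf mg])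
  have I2': "set_integrable lborel {0..1} (\<lambda>x. (y x)^2)" by (rule L2_01_set_integrable[OF Ly])
  have I0: "set_integrable lborel {0..1} (\<lambda>x. (f x)^2)"
    by (intro cont_set_integrable continuous_intros P(3))
  have I4: "set_integrable lborel {0..1} (\<lambda>x. (f x - y x)^2)"
    by (rule set_integrable_sq_diff[OF I0 I2' mf my])
  have "(LINT x:{0..1}|lborel. (deriv f x)^2) \<le> (LINT x:{0..1}|lborel. 2*(g x)^2 + 2*(deriv f x - g x)^2)"
  proof (rule set_integral_mono[OF I1])
    show "set_integrable lborel {0..1} (\<lambda>x. 2 * (g x)\<^sup>2 + 2 * (deriv f x - g x)\<^sup>2)"
      using I2 I3 by auto
    fix x
    show "(deriv f x)\<^sup>2 \<le> 2 * (g x)\<^sup>2 + 2 * (deriv f x - g x)\<^sup>2"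
      using zero_le_square[of "deriv f x - 2 * g x"] by (simp add: power2_eq_square algebra_simps)
  qed
  also have "\<dots> = 2 * L2_sq g + 2 * L2_sq (\<lambda>x. deriv (\<phi> k) x - g x)"
    using I2 I3 by (simp add: L2_sq_def f_def)
  also have "\<dots> \<le> 4" using gn k2 by simp
  finally have E4: "(LINT x:{0..1}|lborel. (deriv f x)^2) \<le> 4" .
  have fb: "\<bar>f x\<bar> \<le> 5/2" if "x \<in> {0..1}" for x
    using sc_bound[OF sc A that] E4 by simp
  have I5: "set_integrable lborel {0..1} (\<lambda>x. (Qm*(5/2) + Qm^2/2) + (1/2) * (f x - y x)^2)"
    using const_int I4 by auto
  have "(LINT x:{0..1}|lborel. q x * y x) \<le> (LINT x:{0..1}|lborel. (Qm*(5/2) + Qm^2/2) + (1/2) * (f x - y x)^2)"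
  proof (rule set_integral_mono_AE[OF SI I5])
    have "AE x in lborel. x \<noteq> 0" "AE x in lborel. x \<noteq> 1" by (rule AE_lborel_singleton)+
    then show "AE x\<in>{0..1} in lborel. q x * y x \<le> Qm * (5 / 2) + Qm\<^sup>2 / 2 + 1 / 2 * (f x - y x)\<^sup>2"
    proof eventually_elim
      case (elim x)
      show ?case
      proof
        assume x: "x \<in> {0..1}"
        then have x': "x \<in> {0<..<1}" using elim by auto
        have qx: "\<bar>q x\<bar> \<le> Qm" using qb x' by auto
        have "q x * y x = q x * f x + q x * (y x - f x)" by (simp add: algebra_simps)
        also have "\<dots> \<le> \<bar>q x\<bar> * \<bar>f x\<bar> + \<bar>q x\<bar> * \<bar>y x - f x\<bar>"
          by (intro add_mono) (simp_all add: abs_mult[symmetric])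
        also have "\<bar>q x\<bar> * \<bar>f x\<bar> \<le> Qm * (5/2)"
          by (intro mult_mono qx fb x) (use Qm in auto)
        also have "\<bar>q x\<bar> * \<bar>y x - f x\<bar> \<le> ((\<bar>q x\<bar>)^2 + (y x - f x)^2)/2"
          using zero_le_square[of "\<bar>q x\<bar> - \<bar>y x - f x\<bar>"] by (simp add: power2_eq_square algebra_simps)
        also have "(\<bar>q x\<bar>)^2 \<le> Qm^2" using qx by (intro power_mono) auto
        finally show "q x * y x \<le> Qm * (5 / 2) + Qm\<^sup>2 / 2 + 1 / 2 * (f x - y x)\<^sup>2"
          by (simp add: power2_commute[of "y x"] divide_simps)
      qed
    qed
  qed
  also have "\<dots> = (Qm*(5/2) + Qm^2/2) + (1/2) * L2_sq (\<lambda>x. \<phi> k x - y x)"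
    using const_int I4 by (simp add: L2_sq_def f_def const_LINT)
  also have "\<dots> \<le> Qm*(5/2) + Qm^2/2 + 1/2" using k1 by simp
  finally show ?thesis .
qed

lemma yprime_bound:
  fixes y q :: "real \<Rightarrow> real"
  assumes cy: "continuous_on {0..1} y"
    and dy: "\<forall>x\<in>{0<..<1}. y differentiable (at x) \<and> (deriv y has_real_derivative (q x - lam) * y x) (at x)"
    and qb: "\<forall>x\<in>{0<..<1}. \<bar>q x\<bar> \<le> Qm"
  obtains B where "B \<ge> 0" "\<And>x. x \<in> {0<..<1} \<Longrightarrow> \<bar>deriv y x\<bar> \<le> B"
proof -
  obtain M where M: "M \<ge> 0" "\<And>x. x \<in> {0..1} \<Longrightarrow> norm (y x) \<le> M"
    using continuous_on_compact_bound[OF _ cy] by auto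
  define B where "B = \<bar>deriv y (1/2)\<bar> + (\<bar>Qm\<bar> + \<bar>lam\<bar>) * M"
  have key: "\<bar>deriv y b - deriv y a\<bar> \<le> (\<bar>Qm\<bar> + \<bar>lam\<bar>) * M" if ab: "0 < a" "a < b" "b < 1" for a b
  proof -
    obtain z where z: "a < z" "z < b" "deriv y b - deriv y a = (b - a) * ((q z - lam) * y z)"
      using MVT2[OF ab(2), of "deriv y" "\<lambda>z. (q z - lam) * y z"] dy ab by force
    have "\<bar>q z\<bar> \<le> Qm" using qb z ab by auto
    then have "\<bar>q z - lam\<bar> \<le> \<bar>Qm\<bar> + \<bar>lam\<bar>" by linarith
    moreover have "\<bar>y z\<bar> \<le> M" using M(2)[of z] z ab by auto
    ultimately have "\<bar>(q z - lam) * y z\<bar> \<le> (\<bar>Qm\<bar> + \<bar>lam\<bar>) * M"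
      unfolding abs_mult by (intro mult_mono) auto
    moreover have "\<bar>b - a\<bar> \<le> 1" using ab by auto
    ultimately have "\<bar>b - a\<bar> * \<bar>(q z - lam) * y z\<bar> \<le> 1 * ((\<bar>Qm\<bar> + \<bar>lam\<bar>) * M)"
      by (intro mult_mono) auto
    then show ?thesis using z by (simp add: abs_mult)
  qed
  show ?thesis
  proof (rule that[of B])
    show "B \<ge> 0" using M by (simp add: B_def)
    fix x :: real assume x: "x \<in> {0<..<1}"
    consider "x < 1/2" | "x = 1/2" | "x > 1/2" by linarith
    then have "\<bar>deriv y x - deriv y (1/2)\<bar> \<le> (\<bar>Qm\<bar> + \<bar>lam\<bar>) * M"
    proof cases
      case 1 then show ?thesis using key[of x "1/2"] x by (simp add: abs_minus_commute)
    next
      case 2 then show ?thesis using M by (simp add: \<open>x = 1/2\<close>)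
    next
      case 3 then show ?thesis using key[of "1/2" x] x by simp
    qed
    then show "\<bar>deriv y x\<bar> \<le> B" unfolding B_def by linarith
  qed
qed

lemma y_lin_bound:
  fixes y :: "real \<Rightarrow> real"
  assumes cy: "continuous_on {0..1} y" and y0: "y 0 = 0" and y1: "y 1 = 0"
    and dy: "\<forall>x\<in>{0<..<1}. y differentiable (at x)"
    and B: "\<And>x. x \<in> {0<..<1} \<Longrightarrow> \<bar>deriv y x\<bar> \<le> B"
    and x: "x \<in> {0<..<1}"
  shows "\<bar>y x\<bar> \<le> B * x" "\<bar>y x\<bar> \<le> B * (1 - x)"
proof -
  obtain l z where z: "0 < z" "z < x" "DERIV y z :> l" "y x - y 0 = (x - 0) * l"
    using MVT[of 0 x y] x dy continuous_on_subset[OF cy, of "{0..x}"] by force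
  have "l = deriv y z" using z(3) by (simp add: DERIV_imp_deriv)
  then have "\<bar>l\<bar> \<le> B" using B[of z] z x by auto
  then show "\<bar>y x\<bar> \<le> B * x" using z x y0 by (simp add: abs_mult mult.commute mult_right_mono)
  obtain l z where z: "x < z" "z < 1" "DERIV y z :> l" "y 1 - y x = (1 - x) * l"
    using MVT[of x 1 y] x dy continuous_on_subset[OF cy, of "{x..1}"] by force
  have "l = deriv y z" using z(3) by (simp add: DERIV_imp_deriv)
  then have "\<bar>l\<bar> \<le> B" using B[of z] z x by auto
  moreover have "\<bar>y x\<bar> = \<bar>l\<bar> * (1 - x)"
  proof -
    have "y x = - ((1-x) * l)" using z y1 by simp
    moreover have "1 - x > 0" using z by simp
    ultimately show ?thesis by (simp add: abs_mult)
  qed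
  ultimately show "\<bar>y x\<bar> \<le> B * (1 - x)" using x by (simp add: mult_right_mono)
qed


lemma ident_ab: "a \<noteq> 0 \<Longrightarrow> b \<noteq> (0::real) \<Longrightarrow> (1/a^2 + 1/b^2) - (1/a - 1/b)^2 = 2/(b*a)"
  by (simp add: field_simps power2_eq_square)

lemma ident_w: "0 < x \<Longrightarrow> x < (1::real) \<Longrightarrow> (1/(1-x)^2 + 1/x^2) - (1/(1-x) - 1/x)^2 = 2/(x*(1-x))"
  using ident_ab[of "1-x" x] by simp

lemma two_over_ge8: "0 < x \<Longrightarrow> x < (1::real) \<Longrightarrow> 2/(x*(1-x)) \<ge> 8"
proof -
  assume x: "0 < x" "x < 1"
  have p: "x*(1-x) > 0" using x by simp
  have "x*(1-x) \<le> 1/4" using zero_le_square[of "x - 1/2"] by (simp add: power2_eq_square algebra_simps)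
  then show ?thesis using p by (simp add: field_simps)
qed

lemma eig_ge8:
  fixes y q :: "real \<Rightarrow> real"
  assumes cy: "continuous_on {0..1} y" and y0: "y 0 = 0" and y1: "y 1 = 0"
    and dy: "\<forall>x\<in>{0<..<1}. y differentiable (at x) \<and> (deriv y has_real_derivative (q x - lam) * y x) (at x)"
    and qnn: "\<forall>x\<in>{0<..<1}. q x \<ge> 0" and qb: "\<forall>x\<in>{0<..<1}. \<bar>q x\<bar> \<le> Qm"
    and nrm: "integral {0..1} (\<lambda>x. (y x)^2) = 1"
  shows "lam \<ge> 8"
proof -
  obtain B where B: "B \<ge> 0" "\<And>x. x \<in> {0<..<1} \<Longrightarrow> \<bar>deriv y x\<bar> \<le> B"
    using yprime_bound[OF cy dy qb] by blast
  have lb: "\<bar>y x\<bar> \<le> B * x" "\<bar>y x\<bar> \<le> B * (1 - x)" if "x \<in> {0<..<1}" for x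
    using y_lin_bound[OF cy y0 y1 _ B(2) that] dy by auto
  define G where "G = (\<lambda>t. y t * deriv y t + (1/(1-t) - 1/t) * (y t)^2)"
  define G' where "G' = (\<lambda>t. (deriv y t)^2 + (q t - lam)*(y t)^2 + (1/(1-t)^2 + 1/t^2) * (y t)^2
      + (1/(1-t) - 1/t) * (2 * y t * deriv y t))"
  define H where "H = (\<lambda>t. if 0 < t \<and> t < 1 then G t else 0)"
  define H' where "H' = (\<lambda>t. if 0 < t \<and> t < 1 then G' t else (8 - lam) * (y t)^2)"
  have dG: "(G has_real_derivative G' x) (at x)" if x: "x \<in> {0<..<1}" for x
  proof -
    have d1: "(y has_real_derivative deriv y x) (at x)" using dy x by (simp add: DERIV_deriv_iff_real_differentiable)
    have d2: "(deriv y has_real_derivative (q x - lam) * y x) (at x)" using dy x by auto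
    have dw: "((\<lambda>t. 1/(1-t) - 1/t) has_real_derivative (1/(1-x)^2 + 1/x^2)) (at x)"
      using x by (auto intro!: derivative_eq_intros simp: power2_eq_square)
    have d3: "((\<lambda>t. (y t)^2) has_real_derivative 2 * y x * deriv y x) (at x)"
      by (auto intro!: derivative_eq_intros d1)
    have "(G has_real_derivative (deriv y x * deriv y x + (q x - lam) * y x * y x)
        + ((1/(1-x)^2 + 1/x^2) * (y x)^2 + 2 * y x * deriv y x * (1/(1-x) - 1/x))) (at x)"
      unfolding G_def by (rule DERIV_add[OF DERIV_mult[OF d1 d2] DERIV_mult[OF dw d3]])
    moreover have "(deriv y x * deriv y x + (q x - lam) * y x * y x)
        + ((1/(1-x)^2 + 1/x^2) * (y x)^2 + 2 * y x * deriv y x * (1/(1-x) - 1/x)) = G' x"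
      unfolding G'_def power2_eq_square by (simp only: mult_ac)
    ultimately show ?thesis by simp
  qed
  have dH: "(H has_real_derivative H' x) (at x)" if x: "x \<in> {0<..<1}" for x
  proof -
    have "(G has_real_derivative H' x) (at x)" using dG[OF x] x by (simp add: H'_def)
    then show ?thesis
      by (rule has_field_derivative_transform_within_open[where S="{0<..<1}"]) (use x in \<open>auto simp: H_def\<close>)
  qed
  have Hb: "\<bar>H x\<bar> \<le> 2 * B * \<bar>y x\<bar>" for x
  proof (cases "0 < x \<and> x < 1")
    case False then show ?thesis using B by (auto simp: H_def)
  next
    case True
    then have x: "x \<in> {0<..<1}" by simp
    have a1: "\<bar>y x * deriv y x\<bar> \<le> B * \<bar>y x\<bar>"
      using B(2)[OF x] by (simp add: abs_mult mult.commute[of B] mult_left_mono)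
    have wy: "\<bar>1/(1-x) - 1/x\<bar> * \<bar>y x\<bar> \<le> B"
    proof (cases "x \<le> 1/2")
      case True
      then have "\<bar>1/(1-x) - 1/x\<bar> \<le> 1/x"
      proof -
        have "1/(1-x) \<le> 1/x" using x True by (intro divide_left_mono) auto
        moreover have "1/(1-x) > 0" using x by simp
        ultimately show ?thesis by linarith
      qed
      moreover have "\<bar>y x\<bar> \<le> B * x" using lb x by auto
      ultimately have "\<bar>1/(1-x) - 1/x\<bar> * \<bar>y x\<bar> \<le> 1/x * (B * x)" by (intro mult_mono) (use x in auto)
      then show ?thesis using x by simp
    next
      case False
      then have "\<bar>1/(1-x) - 1/x\<bar> \<le> 1/(1-x)"
      proof -
        have "1/x \<le> 1/(1-x)" using x False by (intro divide_left_mono) auto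
        moreover have "1/x > 0" using x by simp
        ultimately show ?thesis by linarith
      qed
      moreover have "\<bar>y x\<bar> \<le> B * (1-x)" using lb x by auto
      ultimately have "\<bar>1/(1-x) - 1/x\<bar> * \<bar>y x\<bar> \<le> 1/(1-x) * (B * (1-x))" by (intro mult_mono) (use x in auto)
      then show ?thesis using x by simp
    qed
    have a2: "\<bar>(1/(1-x) - 1/x) * (y x)^2\<bar> \<le> B * \<bar>y x\<bar>"
      using mult_right_mono[OF wy, of "\<bar>y x\<bar>"] by (simp add: abs_mult power2_eq_square mult.assoc)
    show ?thesis unfolding H_def G_def using True a1 a2 by (simp add: abs_triangle_ineq order_trans[OF abs_triangle_ineq])
  qed
  have cH: "continuous_on {0..1} H"
    unfolding continuous_on_eq_continuous_within
  proof
    fix x :: real assume x: "x \<in> {0..1}"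
    show "continuous (at x within {0..1}) H"
    proof (cases "x = 0 \<or> x = 1")
      case False
      then have x': "x \<in> {0<..<1}" using x by auto
      have "isCont H x" by (rule DERIV_isCont[OF dH[OF x']])
      then show ?thesis by (rule continuous_at_imp_continuous_within)
    next
      case True
      then have H0: "H x = 0" and yx: "y x = 0" by (auto simp: H_def y0 y1)
      have "continuous (at x within {0..1}) y" using cy x by (simp add: continuous_on_eq_continuous_within)
      then have ty: "(y \<longlongrightarrow> 0) (at x within {0..1})" using yx by (simp add: continuous_within)
      have "((\<lambda>t. 2 * B * \<bar>y t\<bar>) \<longlongrightarrow> 2 * B * \<bar>0\<bar>) (at x within {0..1})"
        by (intro tendsto_intros ty)
      then have t2: "((\<lambda>t. 2 * B * \<bar>y t\<bar>) \<longlongrightarrow> 0) (at x within {0..1})" by simp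
      have ev: "eventually (\<lambda>t. norm (H t) \<le> 2 * B * \<bar>y t\<bar>) (at x within {0..1})"
        by (rule always_eventually) (simp add: Hb)
      have "(H \<longlongrightarrow> 0) (at x within {0..1})" by (rule Lim_null_comparison[OF ev t2])
      then show ?thesis unfolding continuous_within H0 .
    qed
  qed
  have "(H' has_integral (H 1 - H 0)) {0..1}"
    by (rule fundamental_theorem_of_calculus_interior)
       (auto simp: has_real_derivative_iff_has_vector_derivative[symmetric] intro!: dH cH)
  then have i1: "(H' has_integral 0) {0..1}" by (simp add: H_def)
  have yi: "(\<lambda>x. (y x)^2) integrable_on {0..1}"
    by (intro integrable_continuous_real continuous_intros cy)
  have i2: "((\<lambda>x. (8 - lam) * (y x)^2) has_integral (8 - lam) * 1) {0..1}"
    using has_integral_mult_right[OF integrable_integral[OF yi], of "8 - lam"] nrm by simp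
  have le: "(8 - lam) * (y x)^2 \<le> H' x" if "x \<in> {0..1}" for x
  proof (cases "0 < x \<and> x < 1")
    case False then show ?thesis by (auto simp: H'_def)
  next
    case True
    define w where "w = 1/(1-x) - 1/x"
    have "H' x - (8 - lam) * (y x)^2 = (deriv y x + w * y x)^2 + ((1/(1-x)^2 + 1/x^2) - w^2 - 8) * (y x)^2 + q x * (y x)^2"
      using True by (simp add: H'_def G'_def w_def power2_eq_square algebra_simps)
    also have "\<dots> \<ge> 0"
    proof -
      have "(1/(1-x)^2 + 1/x^2) - w^2 - 8 \<ge> 0" using ident_w[of x] two_over_ge8[of x] True by (simp add: w_def)
      moreover have "q x \<ge> 0" using qnn True by auto
      ultimately show ?thesis by (intro add_nonneg_nonneg mult_nonneg_nonneg) auto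
    qed
    finally show ?thesis by simp
  qed
  have "(8 - lam) * 1 \<le> 0" using has_integral_le[OF i2 i1 le] .
  then show ?thesis by simp
qed

lemma key_ineq:
  assumes "lam > 0"
  shows "2 * \<bar>a * b\<bar> \<le> (b^2 + lam * a^2) / sqrt lam"
proof -
  define s where "s = sqrt lam"
  have s: "s > 0" "s^2 = lam" using assms by (auto simp: s_def)
  have "0 \<le> (\<bar>b\<bar> - s * \<bar>a\<bar>)^2" by simp
  then have "2 * s * \<bar>a * b\<bar> \<le> b^2 + lam * a^2"
    using s by (simp add: power2_eq_square algebra_simps abs_mult)
  then show ?thesis using s by (simp add: field_simps s_def[symmetric])
qed

lemma gronwall:
  fixes y q :: "real \<Rightarrow> real"
  assumes dy: "\<forall>x\<in>{0<..<1}. y differentiable (at x) \<and> (deriv y has_real_derivative (q x - lam) * y x) (at x)"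
    and qnn: "\<forall>x\<in>{0<..<1}. q x \<ge> 0" and qc: "continuous_on {0<..<1} q" and lam: "lam > 0"
    and e: "0 < e" and lh: "e < lo" "lo \<le> hi" "hi < 1 - e"
  defines "u \<equiv> \<lambda>x. (deriv y x)^2 + lam * (y x)^2"
  shows "u lo \<le> u hi * exp (integral {lo..hi} q / sqrt lam)"
    and "u hi \<le> u lo * exp (integral {lo..hi} q / sqrt lam)"
proof -
  define c0 where "c0 = 1 / sqrt lam"
  have c0: "c0 > 0" using lam by (simp add: c0_def)
  have qce: "continuous_on {e..1-e} q" by (rule continuous_on_subset[OF qc]) (use e lh in auto)
  define Q where "Q = (\<lambda>x. integral {e..x} q)"
  have dQ: "(Q has_real_derivative q x) (at x)" if "x \<in> {lo..hi}" for x
  proof -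
    have "(Q has_vector_derivative q x) (at x within {e..1-e})"
      unfolding Q_def by (rule integral_has_vector_derivative[OF qce]) (use that lh in auto)
    then have "(Q has_vector_derivative q x) (at x)"
      by (subst (asm) at_within_interior) (use that lh in auto)
    then show ?thesis by (simp add: has_real_derivative_iff_has_vector_derivative)
  qed
  have du: "(u has_real_derivative 2 * q x * y x * deriv y x) (at x)" if "x \<in> {lo..hi}" for x
  proof -
    have x: "x \<in> {0<..<1}" using that lh e by auto
    have d1: "(y has_real_derivative deriv y x) (at x)" using dy x by (simp add: DERIV_deriv_iff_real_differentiable)
    have d2: "(deriv y has_real_derivative (q x - lam) * y x) (at x)" using dy x by auto
    have "(u has_real_derivative 2 * deriv y x * ((q x - lam) * y x) + lam * (2 * y x * deriv y x)) (at x)"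
      unfolding u_def by (auto intro!: derivative_eq_intros d1 d2)
    then show ?thesis by (simp add: algebra_simps)
  qed
  have ki: "2 * \<bar>y x * deriv y x\<bar> \<le> c0 * u x" for x
    using key_ineq[OF lam, of "y x" "deriv y x"] by (simp add: u_def c0_def)
  have qx: "q x \<ge> 0" if "x \<in> {lo..hi}" for x using qnn that lh e by auto
  have V: "u lo * exp (c0 * Q lo) \<le> u hi * exp (c0 * Q hi)"
  proof (rule DERIV_nonneg_imp_nondecreasing[OF lh(2)])
    fix x assume "lo \<le> x" "x \<le> hi"
    then have x: "x \<in> {lo..hi}" by auto
    have "((\<lambda>x. u x * exp (c0 * Q x)) has_real_derivative
        2 * q x * y x * deriv y x * exp (c0 * Q x) + (exp (c0 * Q x) * (c0 * q x)) * u x) (at x)"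
      by (rule DERIV_mult[OF du[OF x] DERIV_chain2[OF DERIV_exp]])
         (auto intro!: derivative_eq_intros dQ[OF x])
    moreover have "2 * q x * y x * deriv y x * exp (c0 * Q x) + (exp (c0 * Q x) * (c0 * q x)) * u x \<ge> 0"
    proof -
      have "q x * (2 * (y x * deriv y x) + c0 * u x) \<ge> 0"
        using ki[of x] qx[OF x] by (intro mult_nonneg_nonneg) (auto simp: abs_le_iff)
      then have "exp (c0 * Q x) * (q x * (2 * (y x * deriv y x) + c0 * u x)) \<ge> 0" by simp
      then show ?thesis by (simp add: algebra_simps)
    qed
    ultimately show "\<exists>d. ((\<lambda>x. u x * exp (c0 * Q x)) has_real_derivative d) (at x) \<and> 0 \<le> d" by blast
  qed
  have W: "u hi * exp (- c0 * Q hi) \<le> u lo * exp (- c0 * Q lo)"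
  proof (rule deriv_nonpos_imp_antimono[OF _ _ lh(2)])
    fix x assume x: "x \<in> {lo..hi}"
    show "((\<lambda>x. u x * exp (- c0 * Q x)) has_real_derivative
        2 * q x * y x * deriv y x * exp (- c0 * Q x) + (exp (- c0 * Q x) * (- c0 * q x)) * u x) (at x)"
      by (rule DERIV_mult[OF du[OF x] DERIV_chain2[OF DERIV_exp]])
         (auto intro!: derivative_eq_intros dQ[OF x])
    show "2 * q x * y x * deriv y x * exp (- c0 * Q x) + (exp (- c0 * Q x) * (- c0 * q x)) * u x \<le> 0"
    proof -
      have "q x * (2 * (y x * deriv y x) - c0 * u x) \<le> 0"
        using ki[of x] qx[OF x] by (intro mult_nonneg_nonpos) (auto simp: abs_le_iff)
      then have "exp (- c0 * Q x) * (q x * (2 * (y x * deriv y x) - c0 * u x)) \<le> 0"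
        by (simp add: mult_nonneg_nonpos)
      then show ?thesis by (simp add: algebra_simps)
    qed
  qed
  have QQ: "Q hi - Q lo = integral {lo..hi} q"
  proof -
    have "q integrable_on {e..hi}" by (intro integrable_continuous_real continuous_on_subset[OF qce]) (use lh in auto)
    then have "integral {e..lo} q + integral {lo..hi} q = integral {e..hi} q"
      using Henstock_Kurzweil_Integration.integral_combine[of e lo hi q] lh by auto
    then show ?thesis by (simp add: Q_def)
  qed
  have ex: "exp (c0 * Q hi) = exp (c0 * Q lo) * exp (integral {lo..hi} q / sqrt lam)"
    using QQ by (simp add: c0_def mult_exp_exp[symmetric] algebra_simps)
  show "u lo \<le> u hi * exp (integral {lo..hi} q / sqrt lam)"
    using V unfolding ex by (simp add: mult.assoc[symmetric])
  have ex2: "exp (- c0 * Q lo) = exp (- c0 * Q hi) * exp (integral {lo..hi} q / sqrt lam)"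
  proof -
    have "- c0 * Q lo = - c0 * Q hi + integral {lo..hi} q / sqrt lam"
      using QQ by (simp add: c0_def diff_divide_distrib[symmetric] algebra_simps)
    then show ?thesis by (metis exp_add mult.commute mult_minus_left)
  qed
  show "u hi \<le> u lo * exp (integral {lo..hi} q / sqrt lam)"
    using W unfolding ex2 by (simp add: mult.assoc[symmetric])
qed

lemma q_bound:
  fixes q :: "real \<Rightarrow> real"
  assumes qc: "continuous_on {0<..<1} q"
    and sup: "\<exists>a b. 0 < a \<and> a < b \<and> b < 1 \<and> (\<forall>x\<in>{0<..<1}. q x \<noteq> 0 \<longrightarrow> x \<in> {a..b})"
  obtains Qm where "Qm \<ge> 0" "\<forall>x\<in>{0<..<1}. \<bar>q x\<bar> \<le> Qm"
proof -
  obtain a b where ab: "0 < a" "a < b" "b < 1" "\<forall>x\<in>{0<..<1}. q x \<noteq> 0 \<longrightarrow> x \<in> {a..b}"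
    using sup by blast
  have "continuous_on {a..b} q" by (rule continuous_on_subset[OF qc]) (use ab in auto)
  then obtain M where M: "M \<ge> 0" "\<And>x. x \<in> {a..b} \<Longrightarrow> norm (q x) \<le> M"
    using continuous_on_compact_bound[of "{a..b}" q] by auto
  show ?thesis
  proof (rule that[of M])
    show "M \<ge> 0" by (rule M(1))
    show "\<forall>x\<in>{0<..<1}. \<bar>q x\<bar> \<le> M"
    proof
      fix x :: real assume x: "x \<in> {0<..<1}"
      show "\<bar>q x\<bar> \<le> M"
      proof (cases "q x = 0")
        case True then show ?thesis using M by simp
      next
        case False then show ?thesis using M(2)[of x] ab(4) x by auto
      qed
    qed
  qed
qed

lemma qnorm_bdd:
  fixes q :: "real \<Rightarrow> real"
  assumes qb: "\<forall>x\<in>{0<..<1}. \<bar>q x\<bar> \<le> Qm" and Qm: "Qm \<ge> 0"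
  shows "bdd_above {LINT x:{0..1}|lborel. q x * y x | y g. W0 (1 / 2 ^ m) (1 - 1 / 2 ^ m) y g \<and> L2_sq g \<le> 1}"
proof (rule bdd_aboveI[where M="Qm*(5/2) + Qm^2/2 + 1/2"], clarify)
  fix y g :: "real \<Rightarrow> real"
  assume "W0 (1 / 2 ^ m) (1 - 1 / 2 ^ m) y g" "L2_sq g \<le> 1"
  then show "(LINT x:{0..1}|lborel. q x * y x) \<le> Qm*(5/2) + Qm^2/2 + 1/2"
    by (intro qint_bound[OF qb Qm]) auto
qed


lemma test_fn:
  fixes q :: "real \<Rightarrow> real" and l :: nat
  assumes qc: "continuous_on {0<..<1} q" and qnn: "\<forall>x\<in>{0<..<1}. q x \<ge> 0"
    and qb: "\<forall>x\<in>{0<..<1}. \<bar>q x\<bar> \<le> Qm" and Qm: "Qm \<ge> 0"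
    and l: "l \<ge> 2" and lam: "lam \<ge> 8"
    and lh: "1 / 2 ^ l \<le> lo" "lo \<le> hi" "hi \<le> 1 - 1 / 2 ^ l"
  shows "integral {lo..hi} q \<le> sqrt lam * 2 powr (real l / 2) * qnorm q (l + 1)"
proof -
  define \<alpha> :: real where "\<alpha> = 1 / 2 ^ (l+1)"
  have \<alpha>pos: "\<alpha> > 0" by (simp add: \<alpha>_def)
  have "(2::real) ^ l \<ge> 2 ^ 2" by (rule power_increasing) (use l in auto)
  then have \<alpha>le: "\<alpha> \<le> 1/8" by (simp add: \<alpha>_def field_simps)
  have two\<alpha>: "1 / 2 ^ l = 2 * \<alpha>" by (simp add: \<alpha>_def)
  define a0 where "a0 = 5/4 * \<alpha>"
  define L where "L = 3/4 * \<alpha>"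
  define b0 where "b0 = 1 - 2 * \<alpha>"
  have L: "L > 0" using \<alpha>pos by (simp add: L_def)
  have ab: "a0 + L \<le> b0" using \<alpha>le by (simp add: a0_def L_def b0_def)
  have a00: "0 \<le> a0" using \<alpha>pos by (simp add: a0_def)
  have b01: "b0 + L \<le> 1" using \<alpha>pos by (simp add: L_def b0_def)
  define \<phi> where "\<phi> = phi a0 L b0"
  have \<phi>s: "smoothD \<phi>" unfolding \<phi>_def by (rule phi_smooth[OF L ab])
  have \<phi>c: "continuous_on S \<phi>" for S by (rule smoothD_cont[OF \<phi>s])
  have \<phi>z: "\<phi> x = 0" if "x \<le> a0 \<or> x \<ge> b0 + L" for x unfolding \<phi>_def by (rule phi_zero[OF L ab that])
  have \<phi>1: "\<phi> x = 1" if "a0 + L \<le> x" "x \<le> b0" for x unfolding \<phi>_def by (rule phi_one[OF L ab that])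
  have \<phi>nn: "\<phi> x \<ge> 0" for x unfolding \<phi>_def by (rule phi_nonneg[OF L ab])
  have supp: "{a0..b0+L} \<subseteq> {0<..<1}" using \<alpha>pos \<alpha>le by (auto simp: a0_def L_def b0_def)
  have qphic: "continuous_on {a0..b0+L} (\<lambda>x. q x * \<phi> x)"
    by (intro continuous_intros \<phi>c continuous_on_subset[OF qc supp])
  have si0: "set_integrable lborel {a0..b0+L} (\<lambda>x. q x * \<phi> x)"
    unfolding set_integrable_def using borel_integrable_compact[OF _ qphic] by simp
  have si: "set_integrable lborel {0..1} (\<lambda>x. q x * \<phi> x)"
  proof -
    have "(\<lambda>x. indicator {0..1} x *\<^sub>R (q x * \<phi> x)) = (\<lambda>x. indicator {a0..b0+L} x *\<^sub>R (q x * \<phi> x))"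
    proof
      fix x
      show "indicator {0..1} x *\<^sub>R (q x * \<phi> x) = indicator {a0..b0+L} x *\<^sub>R (q x * \<phi> x)"
      proof (cases "x \<in> {a0..b0+L}")
        case True then have "x \<in> {0..1}" using supp by auto
        then show ?thesis using True by simp
      next
        case False then have "\<phi> x = 0" using \<phi>z by auto
        then show ?thesis by simp
      qed
    qed
    then show ?thesis using si0 unfolding set_integrable_def by simp
  qed
  have hk: "(LINT x:{0..1}|lborel. q x * \<phi> x) = integral {0..1} (\<lambda>x. q x * \<phi> x)"
    and hki: "(\<lambda>x. q x * \<phi> x) integrable_on {0..1}"
    using set_borel_integral_eq_integral[OF si] by auto
  have I1: "integral {lo..hi} q = integral {lo..hi} (\<lambda>x. q x * \<phi> x)"
    by (rule integral_cong) (use lh two\<alpha> in \<open>auto intro!: \<phi>1 simp: a0_def L_def b0_def\<close>)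
  have I2: "integral {lo..hi} (\<lambda>x. q x * \<phi> x) \<le> integral {0..1} (\<lambda>x. q x * \<phi> x)"
  proof (rule integral_subset_le)
    show "{lo..hi} \<subseteq> {0..1::real}" using lh two\<alpha> \<alpha>pos by auto
    show "(\<lambda>x. q x * \<phi> x) integrable_on {lo..hi}"
      by (rule integrable_on_subinterval[OF hki]) (use lh two\<alpha> \<alpha>pos in auto)
    show "(\<lambda>x. q x * \<phi> x) integrable_on {0..1}" by (rule hki)
    show "\<forall>x\<in>{0..1}. 0 \<le> q x * \<phi> x"
    proof
      fix x :: real assume x: "x \<in> {0..1}"
      show "0 \<le> q x * \<phi> x"
      proof (cases "x \<in> {0<..<1}")
        case True then show ?thesis using qnn \<phi>nn by simp
      next
        case False then have "x = 0 \<or> x = 1" using x by auto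
        then have "\<phi> x = 0" using \<phi>z a00 b01 by auto
        then show ?thesis by simp
      qed
    qed
  qed
  define N where "N = sqrt lam * 2 powr (real l / 2)"
  have Npos: "N > 0" using lam by (simp add: N_def)
  have N2: "N^2 = lam * 2^l"
  proof -
    have "(2 powr (real l / 2))^2 = 2 powr (real l / 2 + real l / 2)"
      by (simp add: power2_eq_square powr_add[symmetric])
    also have "\<dots> = 2 ^ l" by (simp add: powr_realpow)
    finally show ?thesis using lam by (simp add: N_def power_mult_distrib)
  qed
  define yv where "yv = (\<lambda>x. (1/N) * \<phi> x)"
  have yvs: "smoothD yv" unfolding yv_def by (rule smoothD_cmult[OF \<phi>s])
  have dyv: "deriv yv x = (1/N) * deriv \<phi> x" for x
  proof -
    have "(yv has_real_derivative (1/N) * deriv \<phi> x) (at x)"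
      unfolding yv_def by (intro DERIV_cmult smoothD_has_deriv[OF \<phi>s])
    then show ?thesis by (rule DERIV_imp_deriv)
  qed
  define gv where "gv = deriv yv"
  have gvc: "continuous_on S gv" for S unfolding gv_def by (rule smoothD_cont[OF smoothD_deriv[OF yvs]])
  have yvc: "continuous_on S yv" for S by (rule smoothD_cont[OF yvs])
  have L2y: "L2_01 yv" unfolding L2_01_def
    using cont_set_integrable[of "\<lambda>x. (yv x)^2"] yvc cont_meas[OF yvc]
    by (auto intro: continuous_intros simp: set_integrable_def)
  have L2g: "L2_01 gv" unfolding L2_01_def
    using cont_set_integrable[of "\<lambda>x. (gv x)^2"] gvc cont_meas[OF gvc]
    by (auto intro: continuous_intros simp: set_integrable_def)
  have sc: "smooth_compact \<alpha> (1 - \<alpha>) yv"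
    unfolding smooth_compact_def
  proof (intro conjI)
    show "\<forall>k x. (deriv ^^ k) yv differentiable (at x)" using smoothD_diffble[OF yvs] by blast
    show "\<exists>c d. \<alpha> < c \<and> c \<le> d \<and> d < 1 - \<alpha> \<and> (\<forall>x. x \<notin> {c..d} \<longrightarrow> yv x = 0)"
      using \<alpha>pos ab L \<phi>z by (intro exI[of _ a0] exI[of _ "b0+L"]) (auto simp: a0_def b0_def L_def yv_def)
  qed
  have W: "W0 \<alpha> (1 - \<alpha>) yv gv"
    unfolding W0_def
  proof (intro conjI L2y L2g exI[of _ "\<lambda>k. yv"])
    show "\<forall>k. smooth_compact \<alpha> (1 - \<alpha>) yv" using sc by simp
    show "(\<lambda>k. L2_sq (\<lambda>x. yv x - yv x)) \<longlonglongrightarrow> 0" by (simp add: L2_sq_def)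
    show "(\<lambda>k. L2_sq (\<lambda>x. deriv yv x - gv x)) \<longlonglongrightarrow> 0" by (simp add: L2_sq_def gv_def)
  qed
  have en: "integral {0..1} (\<lambda>x. (deriv \<phi> x)^2) \<le> 8 / (3*L)"
    unfolding \<phi>_def by (rule phi_energy[OF L ab a00 b01])
  have gn: "L2_sq gv \<le> 1"
  proof -
    have "L2_sq gv = integral {0..1} (\<lambda>x. (gv x)^2)"
      unfolding L2_sq_def
      by (rule set_borel_integral_eq_integral(2)) (intro cont_set_integrable continuous_intros gvc)
    also have "\<dots> = integral {0..1} (\<lambda>x. (1/N^2) * (deriv \<phi> x)^2)"
      by (simp add: gv_def dyv power_mult_distrib power_divide)
    also have "\<dots> = (1/N^2) * integral {0..1} (\<lambda>x. (deriv \<phi> x)^2)" by simp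
    also have "\<dots> \<le> (1/N^2) * (8 / (3*L))" using en Npos by (intro mult_left_mono) auto
    also have "\<dots> \<le> 1"
    proof -
      have "8 / (3*L) = (64/9) * 2^l" by (simp add: L_def \<alpha>_def field_simps)
      moreover have "(64/9) * (2::real)^l \<le> lam * 2^l" using lam by (intro mult_right_mono) auto
      ultimately have X: "8 / (3*L) \<le> N^2" using N2 by linarith
      have "N^2 > 0" using Npos by simp
      then have "8 / (3*L) / N^2 \<le> 1" using X by (metis divide_le_eq_1_pos)
      then show ?thesis by (simp add: mult.commute)
    qed
    finally show ?thesis .
  qed
  have mem: "(LINT x:{0..1}|lborel. q x * yv x) \<in>
      {LINT x:{0..1}|lborel. q x * y x | y g. W0 (1 / 2 ^ (l+1)) (1 - 1 / 2 ^ (l+1)) y g \<and> L2_sq g \<le> 1}"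
    using W gn unfolding \<alpha>_def by blast
  have le: "(LINT x:{0..1}|lborel. q x * yv x) \<le> qnorm q (l+1)"
    unfolding qnorm_def by (rule cSup_upper[OF mem qnorm_bdd[OF qb Qm]])
  have "(LINT x:{0..1}|lborel. q x * yv x) = (1/N) * (LINT x:{0..1}|lborel. q x * \<phi> x)"
    by (simp add: yv_def mult.left_commute)
  then have e: "integral {0..1} (\<lambda>x. q x * \<phi> x) = N * (LINT x:{0..1}|lborel. q x * yv x)"
    using Npos hk by simp
  have "integral {0..1} (\<lambda>x. q x * \<phi> x) \<le> N * qnorm q (l+1)"
    unfolding e using le Npos by (intro mult_left_mono) auto
  then show ?thesis using I1 I2 by (simp add: N_def)
qed

theorem mainTheorem9:
  fixes q y :: "real \<Rightarrow> real" and n l :: nat and x1 x2 :: real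
  assumes "continuous_on {0<..<1} q"
    and "\<forall>x\<in>{0<..<1}. q x \<ge> 0"
    and "\<exists>a b. 0 < a \<and> a < b \<and> b < 1 \<and> (\<forall>x\<in>{0<..<1}. q x \<noteq> 0 \<longrightarrow> x \<in> {a..b})"
    and "l \<ge> 2"
    and "eigfun q (eig q n) y"
    and "integral {0..1} (\<lambda>x. (y x)\<^sup>2) = 1"
    and "x1 \<in> {1 / 2 ^ l .. 1 - 1 / 2 ^ l}"
    and "x2 \<in> {1 / 2 ^ l .. 1 - 1 / 2 ^ l}"
  shows "uqn q n y x1 / uqn q n y x2 \<le> exp (2 powr (real l / 2) * qnorm q (l + 1))"
proof -
  note qc = assms(1) and qnn = assms(2) and l = assms(4)
  define lam where "lam = eig q n"
  have cy: "continuous_on {0..1} y" and y0: "y 0 = 0" and y1: "y 1 = 0"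
    and dy: "\<forall>x\<in>{0<..<1}. y differentiable (at x) \<and> (deriv y has_real_derivative (q x - lam) * y x) (at x)"
    using assms(5) unfolding eigfun_def lam_def by auto
  obtain Qm where Qm: "Qm \<ge> 0" "\<forall>x\<in>{0<..<1}. \<bar>q x\<bar> \<le> Qm"
    using q_bound[OF qc assms(3)] by blast
  have lam8: "lam \<ge> 8" by (rule eig_ge8[OF cy y0 y1 dy qnn Qm(2) assms(6)])
  define lo where "lo = min x1 x2"
  define hi where "hi = max x1 x2"
  define e :: real where "e = 1 / 2 ^ (l+1)"
  have epos: "e > 0" by (simp add: e_def)
  have two_e: "1 / 2 ^ l = 2 * e" by (simp add: e_def)
  have lh: "1 / 2 ^ l \<le> lo" "lo \<le> hi" "hi \<le> 1 - 1 / 2 ^ l"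
    using assms(7,8) by (auto simp: lo_def hi_def)
  have lh': "e < lo" "hi < 1 - e" using lh two_e epos by auto
  define u where "u = (\<lambda>x. (deriv y x)^2 + lam * (y x)^2)"
  define I where "I = integral {lo..hi} q"
  have lam0: "lam > 0" using lam8 by simp
  note G = gronwall[OF dy qnn qc lam0 epos lh'(1) lh(2) lh'(2), folded u_def I_def]
  have u12: "u x1 \<le> u x2 * exp (I / sqrt lam)"
  proof (cases "x1 \<le> x2")
    case True then show ?thesis using G(1) by (simp add: lo_def hi_def u_def)
  next
    case False then show ?thesis using G(2) by (simp add: lo_def hi_def u_def)
  qed
  have Ib: "I \<le> sqrt lam * 2 powr (real l / 2) * qnorm q (l + 1)"
    unfolding I_def by (rule test_fn[OF qc qnn Qm(2) Qm(1) l lam8 lh])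
  then have "I / sqrt lam \<le> 2 powr (real l / 2) * qnorm q (l + 1)"
    using lam0 by (simp add: divide_le_eq mult.commute mult.left_commute)
  then have Eb: "exp (I / sqrt lam) \<le> exp (2 powr (real l / 2) * qnorm q (l + 1))" by simp
  have u2: "u x2 \<ge> 0" using lam0 by (simp add: u_def)
  have u1: "u x1 \<le> u x2 * exp (2 powr (real l / 2) * qnorm q (l + 1))"
    using u12 mult_left_mono[OF Eb u2] by linarith
  have uq: "uqn q n y x = u x" for x by (simp add: uqn_def u_def lam_def)
  show ?thesis
  proof (cases "u x2 = 0")
    case True then show ?thesis by (simp add: uq)
  next
    case False
    then have "u x2 > 0" using u2 by simp
    then show ?thesis using u1 by (simp add: uq divide_le_eq mult.commute)
  qed
qed

end
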